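(* For each $k\in\mathbb{Z}$, the set of standard monomials $\{z_k[a_1,a_2]\}_{a_1,a_2\in\mathbb{Z}}$, where $z_k[a_1,a_2]=x_{k-1}^{[a_2]_+}x_k^{[-a_1]_+}x_{k+1}^{[-a_2]_+}x_{k+2}^{[a_1]_+}$, is a $\underline\Bbbk$-basis of $\mathcal{A}(P_1,P_2)$.
   Context: $[a]_+=\max(a,0)$. $\Bbbk$ is a field of characteristic zero and $P_1,P_2\in\Bbbk[z]$ are monic palindromic polynomials (palindromic: $P(z)=z^dP(z^{-1})$ for $d=\deg P$). With $x_1,x_2$ commuting indeterminates, define $x_k\in\Bbbk(x_1,x_2)$ for all $k\in\mathbb{Z}$ by $x_{k+1}x_{k-1}=P_1(x_k)$ if $k$ is even and $x_{k+1}x_{k-1}=P_2(x_k)$ if $k$ is odd. $\underline\Bbbk$ is the $\mathbb{Z}$-subalgebra of $\Bbbk$ generated by the coefficients of $P_1,P_2$, and $\mathcal{A}(P_1,P_2)$ is the $\underline\Bbbk$-subalgebra of $\Bbbk(x_1,x_2)$ generated by all $x_k$. *)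

theory Defs
  imports "HOL-Computational_Algebra.Polynomial" "HOL-Computational_Algebra.Fraction_Field"
begin

(* The rational function field k(x1,x2) is the fraction field of k[x1][x2]. *)
type_synonym 'k ratfun2 = "'k poly poly fract"

definition emb :: "'k::field_char_0 \<Rightarrow> 'k ratfun2" where
  "emb c = Fract [:[:c:]:] 1"

definition var1 :: "'k::field_char_0 ratfun2" where
  "var1 = Fract [:[:0, 1:]:] 1"

definition var2 :: "'k::field_char_0 ratfun2" where
  "var2 = Fract [:0, 1:] 1"

definition evalP :: "'k::field_char_0 poly \<Rightarrow> 'k ratfun2 \<Rightarrow> 'k ratfun2" where
  "evalP P y = poly (map_poly emb P) y"

definition palindromic :: "'k::field poly \<Rightarrow> bool" where
  "palindromic P \<longleftrightarrow> reflect_poly P = P"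

(* the exchange polynomial used in x_{k+1} x_{k-1} = P(x_k) *)
definition exch :: "'k::field_char_0 poly \<Rightarrow> 'k poly \<Rightarrow> int \<Rightarrow> 'k poly" where
  "exch P1 P2 k = (if even k then P1 else P2)"

(* forward: clpos n = (x_{n+1}, x_{n+2}) *)
fun clpos :: "'k::field_char_0 poly \<Rightarrow> 'k poly \<Rightarrow> nat \<Rightarrow> 'k ratfun2 \<times> 'k ratfun2" where
  "clpos P1 P2 0 = (var1, var2)"
| "clpos P1 P2 (Suc n) = (case clpos P1 P2 n of (a, b) \<Rightarrow>
      (b, evalP (exch P1 P2 (int n + 2)) b / a))"

(* backward: clneg n = (x_{2-n}, x_{1-n}) *)
fun clneg :: "'k::field_char_0 poly \<Rightarrow> 'k poly \<Rightarrow> nat \<Rightarrow> 'k ratfun2 \<times> 'k ratfun2" where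
  "clneg P1 P2 0 = (var2, var1)"
| "clneg P1 P2 (Suc n) = (case clneg P1 P2 n of (a, b) \<Rightarrow>
      (b, evalP (exch P1 P2 (1 - int n)) b / a))"

definition clx :: "'k::field_char_0 poly \<Rightarrow> 'k poly \<Rightarrow> int \<Rightarrow> 'k ratfun2" where
  "clx P1 P2 k = (if k \<ge> 1 then fst (clpos P1 P2 (nat (k - 1)))
                  else snd (clneg P1 P2 (nat (1 - k))))"

inductive_set ring_gen :: "'a::comm_ring_1 set \<Rightarrow> 'a set" for S where
  gen: "s \<in> S \<Longrightarrow> s \<in> ring_gen S"
| zero: "0 \<in> ring_gen S"
| one: "1 \<in> ring_gen S"
| add: "a \<in> ring_gen S \<Longrightarrow> b \<in> ring_gen S \<Longrightarrow> a + b \<in> ring_gen S"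
| neg: "a \<in> ring_gen S \<Longrightarrow> - a \<in> ring_gen S"
| mult: "a \<in> ring_gen S \<Longrightarrow> b \<in> ring_gen S \<Longrightarrow> a * b \<in> ring_gen S"

definition coeff_ring :: "'k::field_char_0 poly \<Rightarrow> 'k poly \<Rightarrow> 'k ratfun2 set" where
  "coeff_ring P1 P2 = ring_gen (emb ` (set (coeffs P1) \<union> set (coeffs P2)))"

definition clalg :: "'k::field_char_0 poly \<Rightarrow> 'k poly \<Rightarrow> 'k ratfun2 set" where
  "clalg P1 P2 = ring_gen (emb ` (set (coeffs P1) \<union> set (coeffs P2)) \<union> range (clx P1 P2))"

definition pos_part :: "int \<Rightarrow> nat" where
  "pos_part a = nat (max a 0)"

definition stdmon :: "'k::field_char_0 poly \<Rightarrow> 'k poly \<Rightarrow> int \<Rightarrow> int \<times> int \<Rightarrow> 'k ratfun2" where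
  "stdmon P1 P2 k a = (case a of (a1, a2) \<Rightarrow>
     clx P1 P2 (k - 1) ^ pos_part a2 * clx P1 P2 k ^ pos_part (- a1)
     * clx P1 P2 (k + 1) ^ pos_part (- a2) * clx P1 P2 (k + 2) ^ pos_part a1)"

definition is_basis_over :: "'a::comm_ring_1 set \<Rightarrow> 'a set \<Rightarrow> ('i \<Rightarrow> 'a) \<Rightarrow> bool" where
  "is_basis_over R M b \<longleftrightarrow>
     (\<forall>F c. finite F \<longrightarrow> (\<forall>i\<in>F. c i \<in> R) \<longrightarrow> (\<Sum>i\<in>F. c i * b i) = 0 \<longrightarrow> (\<forall>i\<in>F. c i = 0))
   \<and> M = {\<Sum>i\<in>F. c i * b i | F c. finite F \<and> (\<forall>i\<in>F. c i \<in> R)}"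

end

theory Submission
  imports Defs
begin



lemma emb_add: "emb (a + b) = emb a + emb b"
  by (simp add: emb_def)
lemma emb_mult: "emb (a * b) = emb a * emb b"
  by (simp add: emb_def)
lemma emb_0[simp]: "emb 0 = 0"
  by (simp add: emb_def Zero_fract_def)
lemma emb_1[simp]: "emb 1 = 1"
  by (simp add: emb_def One_fract_def pCons_one)
lemma emb_neg: "emb (- a) = - emb a"
  by (simp add: emb_def)
lemma emb_inj: "emb a = emb b \<longleftrightarrow> a = b"
  by (simp add: emb_def eq_fract)
lemma emb_eq0: "emb a = 0 \<longleftrightarrow> a = 0"
  using emb_inj[of a 0] by simp
lemma emb_power: "emb (a ^ n) = emb a ^ n"
  by (induct n) (simp_all add: emb_mult)

lemma map_poly_add_h:
  assumes "f 0 = 0" "\<And>x y. f (x + y) = f x + f y"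
  shows "map_poly f (p + q) = map_poly f p + map_poly f q"
  by (intro poly_eqI) (simp add: coeff_map_poly assms)

lemma map_poly_emb_add: "map_poly emb (p + q) = map_poly emb p + map_poly emb q"
  by (rule map_poly_add_h) (simp_all add: emb_add)

lemma map_poly_emb_smult: "map_poly emb (smult c p) = smult (emb c) (map_poly emb p)"
  by (rule map_poly_smult) (simp_all add: emb_mult)

lemma map_poly_emb_mult: "map_poly emb (p * q) = map_poly emb p * map_poly emb q"
proof (induct p)
  case 0 then show ?case by simp
next
  case (pCons a p)
  show ?case
    by (simp add: map_poly_emb_add map_poly_emb_smult map_poly_pCons pCons(2))
qed

lemma evalP_add: "evalP (p + q) y = evalP p y + evalP q y"
  by (simp add: evalP_def map_poly_emb_add)
lemma evalP_mult: "evalP (p * q) y = evalP p y * evalP q y"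
  by (simp add: evalP_def map_poly_emb_mult)
lemma evalP_0[simp]: "evalP 0 y = 0"
  by (simp add: evalP_def)
lemma evalP_1[simp]: "evalP 1 y = 1"
  by (simp add: evalP_def)
lemma evalP_power: "evalP (p ^ n) y = evalP p y ^ n"
  by (induct n) (simp_all add: evalP_mult)
lemma evalP_const: "evalP [:c:] y = emb c"
  by (simp add: evalP_def map_poly_pCons)
lemma evalP_monom: "evalP (monom c n) y = emb c * y ^ n"
  by (simp add: evalP_def map_poly_monom poly_monom)
lemma evalP_smult: "evalP (smult c p) y = emb c * evalP p y"
  by (simp add: evalP_def map_poly_emb_smult)
lemma evalP_sum: "evalP (\<Sum>i\<in>A. f i) y = (\<Sum>i\<in>A. evalP (f i) y)"
  by (induct A rule: infinite_finite_induct) (simp_all add: evalP_add)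

lemma poly_sum_n:
  assumes "degree p \<le> n"
  shows "poly p (x::'a::comm_ring_1) = (\<Sum>i\<le>n. coeff p i * x ^ i)"
proof -
  have "poly p x = poly (\<Sum>i\<le>n. monom (coeff p i) i) x"
    using poly_as_sum_of_monoms'[OF assms] by simp
  also have "\<dots> = (\<Sum>i\<le>n. coeff p i * x ^ i)"
    by (simp add: poly_sum poly_monom)
  finally show ?thesis .
qed

lemma evalP_sum_form: "evalP P y = (\<Sum>i\<le>degree P. emb (coeff P i) * y ^ i)"
proof -
  have "degree (map_poly emb P) \<le> degree P"
    by (simp add: degree_map_poly emb_eq0)
  then show ?thesis
    unfolding evalP_def by (subst poly_sum_n) (simp_all add: coeff_map_poly)
qed




definition poly2 :: "'k::field_char_0 poly poly \<Rightarrow> 'k ratfun2 \<Rightarrow> 'k ratfun2 \<Rightarrow> 'k ratfun2" where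
  "poly2 G a b = poly (map_poly (\<lambda>p. evalP p a) G) b"

lemma poly2_add: "poly2 (G + H) a b = poly2 G a b + poly2 H a b"
  unfolding poly2_def by (subst map_poly_add_h) (simp_all add: evalP_add)

lemma poly2_0[simp]: "poly2 0 a b = 0"
  by (simp add: poly2_def)

lemma poly2_sum: "poly2 (\<Sum>i\<in>A. f i) a b = (\<Sum>i\<in>A. poly2 (f i) a b)"
  by (induct A rule: infinite_finite_induct) (simp_all add: poly2_add)

lemma poly2_sum_n:
  assumes "degree G \<le> n"
  shows "poly2 G a b = (\<Sum>j\<le>n. evalP (coeff G j) a * b ^ j)"
proof -
  have "degree (map_poly (\<lambda>p. evalP p a) G) \<le> n"
  proof (rule degree_le, intro allI impI)
    fix i assume "n < i"
    then have "coeff G i = 0" using assms by (intro coeff_eq_0) simp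
    then show "coeff (map_poly (\<lambda>p. evalP p a) G) i = 0" by (simp add: coeff_map_poly)
  qed
  then show ?thesis unfolding poly2_def
    by (subst poly_sum_n) (simp_all add: coeff_map_poly)
qed

definition bp :: "'k::field_char_0 poly \<Rightarrow> 'k poly \<Rightarrow> 'k poly poly" where
  "bp A B = smult A (map_poly (\<lambda>t. [:t:]) B)"

lemma coeff_bp_outer: "coeff (bp A B) j = A * [:coeff B j:]"
  by (simp add: bp_def coeff_map_poly)

lemma coeff_bp: "coeff (coeff (bp A B) j) i = coeff A i * coeff B j"
  by (simp add: coeff_bp_outer)

lemma degree_bp: "degree (bp A B) \<le> degree B"
  by (rule degree_le) (simp add: coeff_bp_outer coeff_eq_0)

lemma poly2_bp: "poly2 (bp A B) a b = evalP A a * evalP B b"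
proof -
  have "poly2 (bp A B) a b = (\<Sum>j\<le>degree B. evalP (coeff (bp A B) j) a * b ^ j)"
    by (rule poly2_sum_n[OF degree_bp])
  also have "\<dots> = (\<Sum>j\<le>degree B. evalP A a * (emb (coeff B j) * b ^ j))"
    by (simp add: coeff_bp_outer evalP_smult evalP_mult evalP_const mult_ac)
  also have "\<dots> = evalP A a * evalP B b"
    by (simp add: evalP_sum_form sum_distrib_left)
  finally show ?thesis .
qed

definition ind :: "'k::field_char_0 ratfun2 \<Rightarrow> 'k ratfun2 \<Rightarrow> bool" where
  "ind a b \<longleftrightarrow> (\<forall>G. poly2 G a b = 0 \<longrightarrow> G = 0)"

lemma ind_nz:
  assumes "ind a b" shows "a \<noteq> 0" "b \<noteq> 0"
proof -
  have "poly2 (bp (monom 1 1) 1) a b = a" by (simp add: poly2_bp evalP_monom)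
  moreover have "bp (monom 1 1) 1 \<noteq> (0::'a poly poly)"
  proof
    assume "bp (monom 1 1) 1 = (0::'a poly poly)"
    then have "coeff (coeff (bp (monom 1 1) (1::'a poly)) 0) 1 = 0" by simp
    then show False by (simp add: coeff_bp)
  qed
  ultimately show "a \<noteq> 0" using assms unfolding ind_def by metis
next
  have "poly2 (bp 1 (monom 1 1)) a b = b" by (simp add: poly2_bp evalP_monom)
  moreover have "bp 1 (monom 1 1) \<noteq> (0::'a poly poly)"
  proof
    assume "bp 1 (monom 1 1) = (0::'a poly poly)"
    then have "coeff (coeff (bp (1::'a poly) (monom 1 1)) 1) 0 = 0" by simp
    then show False by (simp add: coeff_bp)
  qed
  ultimately show "b \<noteq> 0" using assms unfolding ind_def by metis
qed

lemma evalP_var1: "evalP p var1 = Fract [:p:] 1"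
proof (induct p)
  case 0 then show ?case by (simp add: Zero_fract_def)
next
  case (pCons c p)
  have "evalP (pCons c p) var1 = emb c + var1 * evalP p var1"
    by (simp add: evalP_def map_poly_pCons)
  also have "\<dots> = Fract [:pCons c p:] 1"
    using pCons(2) by (simp add: emb_def var1_def)
  finally show ?case .
qed

lemma poly_var2: "poly (map_poly (\<lambda>p. Fract [:p:] 1) G) var2 = Fract G 1"
proof (induct G)
  case 0 then show ?case by (simp add: Zero_fract_def)
next
  case (pCons c G)
  have "poly (map_poly (\<lambda>p. Fract [:p:] 1) (pCons c G)) var2
     = Fract [:c:] 1 + var2 * Fract G 1"
    using pCons(2) by (simp add: map_poly_pCons Zero_fract_def)
  also have "\<dots> = Fract (pCons c G) 1"
    by (simp add: var2_def)
  finally show ?case .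
qed

lemma ind_base: "ind var1 (var2::'k::field_char_0 ratfun2)"
  unfolding ind_def poly2_def evalP_var1 poly_var2
  by (simp add: Zero_fract_def eq_fract)




lemma coeff_monom_sum:
  assumes "i \<le> N"
  shows "(\<Sum>j\<le>N. coeff (monom (1::'a::comm_ring_1) j) i * f j) = f i"
proof -
  have "(\<Sum>j\<le>N. coeff (monom (1::'a) j) i * f j) = (\<Sum>j\<le>N. if j = i then f j else 0)"
    by (rule sum.cong) (auto simp: coeff_monom)
  also have "\<dots> = f i" using assms by (simp add: sum.delta)
  finally show ?thesis .
qed

lemma ind_swap:
  assumes "ind a b" shows "ind b a"
  unfolding ind_def
proof (intro allI impI)
  fix G assume G: "poly2 G b a = 0"
  define d where "d = degree G"
  define G' where "G' = (\<Sum>j\<le>d. bp (monom 1 j) (coeff G j))"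
  have "poly2 G' a b = (\<Sum>j\<le>d. a ^ j * evalP (coeff G j) b)"
    by (simp add: G'_def poly2_sum poly2_bp evalP_monom)
  also have "\<dots> = poly2 G b a"
    by (subst poly2_sum_n[of G d]) (simp_all add: d_def mult.commute)
  finally have "G' = 0" using G assms unfolding ind_def by metis
  have "coeff G i = 0" for i
  proof (cases "i \<le> d")
    case True
    have "coeff (coeff G i) l = 0" for l
    proof -
      have "0 = coeff (coeff G' l) i" using \<open>G' = 0\<close> by simp
      also have "\<dots> = (\<Sum>j\<le>d. coeff (monom 1 j) i * coeff (coeff G j) l)"
        by (simp add: G'_def coeff_sum coeff_bp)
      also have "\<dots> = coeff (coeff G i) l" by (rule coeff_monom_sum[OF True])
      finally show ?thesis by simp
    qed
    then show ?thesis by (simp add: poly_eq_iff)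
  next
    case False then show ?thesis by (simp add: d_def coeff_eq_0)
  qed
  then show "G = 0" by (simp add: poly_eq_iff)
qed

lemma ind_step:
  assumes "ind a b" and c: "c = evalP P b / a" and P: "P \<noteq> 0"
  shows "ind b c"
  unfolding ind_def
proof (intro allI impI)
  fix G assume G: "poly2 G b c = 0"
  have a0: "a \<noteq> 0" using ind_nz[OF assms(1)] by simp
  have ca: "c * a = evalP P b" using a0 c by simp
  define N where "N = degree G"
  define H where "H = (\<Sum>j\<le>N. bp (monom 1 (N - j)) (coeff G j * P ^ j))"
  have "poly2 H a b = (\<Sum>j\<le>N. a ^ (N - j) * (evalP (coeff G j) b * evalP P b ^ j))"
    by (simp add: H_def poly2_sum poly2_bp evalP_monom evalP_mult evalP_power)
  also have "\<dots> = (\<Sum>j\<le>N. a ^ N * (evalP (coeff G j) b * c ^ j))"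
  proof (rule sum.cong)
    fix j assume "j \<in> {..N}"
    then have "a ^ N = a ^ (N - j) * a ^ j" by (simp add: power_add[symmetric])
    then show "a ^ (N - j) * (evalP (coeff G j) b * evalP P b ^ j) = a ^ N * (evalP (coeff G j) b * c ^ j)"
      by (simp add: ca[symmetric] power_mult_distrib mult_ac)
  qed simp
  also have "\<dots> = a ^ N * poly2 G b c"
    by (subst poly2_sum_n[of G N]) (simp_all add: N_def sum_distrib_left)
  finally have "H = 0" using G assms(1) unfolding ind_def by simp
  have "coeff G j0 = 0" for j0
  proof (cases "j0 \<le> N")
    case True
    have "coeff (coeff G j0 * P ^ j0) l = 0" for l
    proof -
      have "0 = coeff (coeff H l) (N - j0)" using \<open>H = 0\<close> by simp
      also have "\<dots> = (\<Sum>j\<le>N. coeff (monom 1 (N - j)) (N - j0) * coeff (coeff G j * P ^ j) l)"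
        by (simp add: H_def coeff_sum coeff_bp)
      also have "\<dots> = (\<Sum>j\<le>N. if j = j0 then coeff (coeff G j * P ^ j) l else 0)"
        by (rule sum.cong) (use True in \<open>auto simp: coeff_monom\<close>)
      also have "\<dots> = coeff (coeff G j0 * P ^ j0) l" using True by (simp add: sum.delta)
      finally show ?thesis by simp
    qed
    then have "coeff G j0 * P ^ j0 = 0" by (simp add: poly_eq_iff)
    then show ?thesis using P by simp
  next
    case False then show ?thesis by (simp add: N_def coeff_eq_0)
  qed
  then show "G = 0" by (simp add: poly_eq_iff)
qed




locale cl =
  fixes P1 P2 :: "'k::field_char_0 poly"
  assumes l1: "lead_coeff P1 = 1" and l2: "lead_coeff P2 = 1"
    and pal1: "palindromic P1" and pal2: "palindromic P2"
begin

abbreviation x where "x \<equiv> clx P1 P2"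
abbreviation E where "E \<equiv> exch P1 P2"

lemma E_nz: "E m \<noteq> 0"
  using l1 l2 by (auto simp: exch_def)

declare clpos.simps(2)[simp del] clneg.simps(2)[simp del]

lemma clpos_Suc': "clpos P1 P2 (Suc n) = (snd (clpos P1 P2 n), evalP (E (int n + 2)) (snd (clpos P1 P2 n)) / fst (clpos P1 P2 n))"
  by (cases "clpos P1 P2 n") (simp add: clpos.simps)

lemma clneg_Suc': "clneg P1 P2 (Suc n) = (snd (clneg P1 P2 n), evalP (E (1 - int n)) (snd (clneg P1 P2 n)) / fst (clneg P1 P2 n))"
  by (cases "clneg P1 P2 n") (simp add: clneg.simps)

lemma clpos_fst: "fst (clpos P1 P2 n) = x (int n + 1)"
  by (simp add: clx_def)

lemma clpos_snd: "snd (clpos P1 P2 n) = x (int n + 2)"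
proof -
  have "snd (clpos P1 P2 n) = fst (clpos P1 P2 (Suc n))"
    by (simp only: clpos_Suc' fst_conv)
  also have "\<dots> = x (int n + 2)" by (simp add: clpos_fst add.commute)
  finally show ?thesis .
qed

lemma fwd: "x (int n + 3) = evalP (E (int n + 2)) (x (int n + 2)) / x (int n + 1)"
proof -
  have "x (int n + 3) = snd (clpos P1 P2 (Suc n))"
    by (simp add: clpos_snd add.commute)
  also have "\<dots> = evalP (E (int n + 2)) (x (int n + 2)) / x (int n + 1)"
    by (simp add: clpos_Suc' clpos_snd clpos_fst)
  finally show ?thesis .
qed

lemma clneg_snd: "snd (clneg P1 P2 n) = x (1 - int n)"
proof (cases n)
  case 0 then show ?thesis by (simp add: clx_def)
next
  case (Suc m)
  have "nat (1 - (1 - int n)) = n" by simp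
  then show ?thesis using Suc by (simp add: clx_def)
qed

lemma clneg_fst: "fst (clneg P1 P2 n) = x (2 - int n)"
proof (cases n)
  case 0
  have "x 2 = snd (clpos P1 P2 0)" using clpos_snd[of 0] by simp
  then show ?thesis using 0 by simp
next
  case (Suc m)
  have "fst (clneg P1 P2 n) = snd (clneg P1 P2 m)" using Suc by (simp add: clneg_Suc')
  then show ?thesis using Suc by (simp add: clneg_snd)
qed

lemma bwd: "x (- int n) = evalP (E (1 - int n)) (x (1 - int n)) / x (2 - int n)"
proof -
  have "x (- int n) = snd (clneg P1 P2 (Suc n))"
    by (simp add: clneg_snd)
  also have "\<dots> = evalP (E (1 - int n)) (x (1 - int n)) / x (2 - int n)"
    by (simp add: clneg_Suc' clneg_snd clneg_fst)
  finally show ?thesis .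
qed

lemma x1: "x 1 = var1" by (simp add: clx_def)
lemma x2: "x 2 = var2" using clpos_snd[of 0] by simp

lemma indpos: "ind (x (int n + 1)) (x (int n + 2))"
proof (induct n)
  case 0 then show ?case using ind_base x1 x2 by simp
next
  case (Suc n)
  have "ind (x (int n + 2)) (x (int n + 3))"
    by (rule ind_step[OF Suc fwd E_nz])
  then show ?case by (simp add: add.commute add.left_commute)
qed

lemma indneg: "ind (x (- int n)) (x (1 - int n))"
proof (induct n)
  case 0
  have "ind (x 2) (x 1)" using indpos[of 0] ind_swap by simp
  moreover have "x 0 = evalP (E 1) (x 1) / x 2" using bwd[of 0] by simp
  ultimately have "ind (x 1) (x 0)" using ind_step E_nz by blast
  then show ?case using ind_swap by simp
next
  case (Suc n)
  have "ind (x (1 - int n)) (x (- int n))" using Suc ind_swap by blast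
  moreover have "x (- int (Suc n)) = evalP (E (- int n)) (x (- int n)) / x (1 - int n)"
    using bwd[of "Suc n"] by (simp add: algebra_simps)
  ultimately have "ind (x (- int n)) (x (- int (Suc n)))" using ind_step E_nz by blast
  then show ?case using ind_swap by (simp add: algebra_simps)
qed

lemma ind_all: "ind (x m) (x (m + 1))"
proof (cases "m \<ge> 1")
  case True
  define n where "n = nat (m - 1)"
  have e1: "int n + 1 = m" "int n + 2 = m + 1" using True by (simp_all add: n_def)
  show ?thesis using indpos[of n] unfolding e1 .
next
  case False
  define n where "n = nat (- m)"
  have e1: "- int n = m" "1 - int n = m + 1" using False by (simp_all add: n_def)
  show ?thesis using indneg[of n] unfolding e1 .
qed

lemma x_nz: "x m \<noteq> 0"
  using ind_nz(1)[OF ind_all] by blast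

lemma rel: "x (m + 1) * x (m - 1) = evalP (E m) (x m)"
proof (cases "m \<ge> 2")
  case True
  define n where "n = nat (m - 2)"
  have e1: "int n + 3 = m + 1" "int n + 2 = m" "int n + 1 = m - 1" using True by (simp_all add: n_def)
  have "x (m + 1) = evalP (E m) (x m) / x (m - 1)"
    using fwd[of n] unfolding e1 .
  then show ?thesis using x_nz by simp
next
  case False
  define n where "n = nat (1 - m)"
  have e1: "- int n = m - 1" "1 - int n = m" "2 - int n = m + 1" using False by (simp_all add: n_def)
  have "x (m - 1) = evalP (E m) (x m) / x (m + 1)"
    using bwd[of n] unfolding e1 .
  then show ?thesis using x_nz by simp
qed

end



lemma rg_mono: "S \<subseteq> ring_gen T \<Longrightarrow> ring_gen S \<subseteq> ring_gen T"
proof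
  fix y assume S: "S \<subseteq> ring_gen T" and y: "y \<in> ring_gen S"
  from y show "y \<in> ring_gen T"
    by (induct rule: ring_gen.induct) (use S in \<open>auto intro: ring_gen.intros\<close>)
qed

lemma rg_sub: "S \<subseteq> T \<Longrightarrow> ring_gen S \<subseteq> ring_gen T"
  by (rule rg_mono) (auto intro: ring_gen.gen)

lemma rg_sum: "(\<And>i. i \<in> A \<Longrightarrow> f i \<in> ring_gen S) \<Longrightarrow> sum f A \<in> ring_gen S"
  by (induct A rule: infinite_finite_induct) (auto intro: ring_gen.intros)

lemma rg_power: "a \<in> ring_gen S \<Longrightarrow> a ^ n \<in> ring_gen S"
  by (induct n) (auto intro: ring_gen.intros)

lemma rg_diff: "a \<in> ring_gen S \<Longrightarrow> b \<in> ring_gen S \<Longrightarrow> a - b \<in> ring_gen S"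
  using ring_gen.add[OF _ ring_gen.neg] by (metis diff_conv_add_uminus)

lemma sum_flip: "(\<Sum>i\<le>n. f (n - i)) = (\<Sum>i\<le>(n::nat). f i)"
proof -
  have "(\<Sum>i<Suc n. f (Suc n - Suc i)) = (\<Sum>i<Suc n. f i)"
    by (rule sum.nat_diff_reindex)
  then show ?thesis by (simp add: lessThan_Suc_atMost)
qed

lemma pal_coeff:
  assumes "palindromic P" "i \<le> degree P"
  shows "coeff P (degree P - i) = coeff P i"
  using assms coeff_reflect_poly[of P i] unfolding palindromic_def by simp

lemma evalP_shift:
  "evalP Q c = emb (coeff Q 0) + c * (\<Sum>i<degree Q. emb (coeff Q (Suc i)) * c ^ i)"
proof -
  have "evalP Q c = (\<Sum>i<Suc (degree Q). emb (coeff Q i) * c ^ i)"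
    by (simp add: evalP_sum_form lessThan_Suc_atMost)
  also have "\<dots> = emb (coeff Q 0) + (\<Sum>i<degree Q. emb (coeff Q (Suc i)) * c ^ Suc i)"
    by (subst sum.lessThan_Suc_shift) simp
  also have "\<dots> = emb (coeff Q 0) + c * (\<Sum>i<degree Q. emb (coeff Q (Suc i)) * c ^ i)"
    by (simp add: sum_distrib_left mult_ac)
  finally show ?thesis .
qed

lemma exch_key:
  fixes a b c d e :: "'k::field_char_0 ratfun2"
  assumes pal: "palindromic P" and Q0: "coeff Q 0 = 1" and c0: "c \<noteq> 0"
    and r1: "a * c = evalP P b" and r2: "b * d = evalP Q c" and r3: "c * e = evalP P d"
    and cP: "\<And>i. emb (coeff P i) \<in> ring_gen T" and cQ: "\<And>i. emb (coeff Q i) \<in> ring_gen T"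
    and T: "a \<in> ring_gen T" "b \<in> ring_gen T" "c \<in> ring_gen T" "d \<in> ring_gen T"
  shows "e \<in> ring_gen T"
proof -
  define n where "n = degree P"
  define p where "p i = emb (coeff P i)" for i
  define S where "S = (\<Sum>i<degree Q. emb (coeff Q (Suc i)) * c ^ i)"
  define H where "H = (\<Sum>i\<le>n. p i * d ^ (n - i) * (\<Sum>j<i. (b * d) ^ j))"
  define e' where "e' = d ^ n * a - S * H"
  have hS: "c * S = b * d - 1" using r2 evalP_shift[of Q c] Q0 by (simp add: S_def)
  have "c * e' = d ^ n * (a * c) - (c * S) * H" by (simp add: e'_def algebra_simps)
  also have "\<dots> = (\<Sum>i\<le>n. d ^ n * (p i * b ^ i)) - (\<Sum>i\<le>n. p i * d ^ (n - i) * ((b * d) ^ i - 1))"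
  proof -
    have "(c * S) * H = (b * d - 1) * H" by (simp only: hS)
    also have "\<dots> = (\<Sum>i\<le>n. p i * d ^ (n - i) * ((b * d - 1) * (\<Sum>j<i. (b * d) ^ j)))"
      unfolding H_def sum_distrib_left by (simp add: mult_ac)
    also have "\<dots> = (\<Sum>i\<le>n. p i * d ^ (n - i) * ((b * d) ^ i - 1))"
      by (simp add: power_diff_1_eq)
    finally show ?thesis
      by (simp add: r1 evalP_sum_form n_def p_def sum_distrib_left)
  qed
  also have "\<dots> = (\<Sum>i\<le>n. p i * d ^ (n - i))"
  proof -
    have "d ^ n * (p i * b ^ i) - p i * d ^ (n - i) * ((b * d) ^ i - 1) = p i * d ^ (n - i)"
      if "i \<in> {..n}" for i
    proof -
      have "d ^ n = d ^ (n - i) * d ^ i" using that by (simp add: power_add[symmetric])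
      then show ?thesis by (simp add: power_mult_distrib algebra_simps)
    qed
    then show ?thesis by (simp add: sum_subtractf[symmetric])
  qed
  also have "\<dots> = (\<Sum>i\<le>n. p (n - i) * d ^ i)"
    using sum_flip[of "\<lambda>i. p (n - i) * d ^ i" n] by simp
  also have "\<dots> = (\<Sum>i\<le>n. p i * d ^ i)"
    by (rule sum.cong) (simp_all add: p_def n_def pal_coeff[OF pal])
  also have "\<dots> = evalP P d" by (simp add: evalP_sum_form p_def n_def)
  finally have "c * e' = c * e" using r3 by simp
  then have "e = e'" using c0 by simp
  moreover have "e' \<in> ring_gen T"
    unfolding e'_def S_def H_def p_def
    by (intro rg_diff ring_gen.mult rg_power rg_sum T cP cQ)
  ultimately show ?thesis by simp
qed




context cl begin

abbreviation Cs where "Cs \<equiv> emb ` (set (coeffs P1) \<union> set (coeffs P2))"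
abbreviation R where "R \<equiv> coeff_ring P1 P2"

lemma coeff_in_Cs:
  assumes "Cs \<subseteq> T" shows "emb (coeff (E m) i) \<in> ring_gen T"
proof (cases "coeff (E m) i = 0")
  case True then show ?thesis by (simp add: ring_gen.zero)
next
  case False
  then have "i \<le> degree (E m)" by (rule le_degree)
  then have "coeff (E m) i \<in> set (coeffs (E m))" using coeff_in_coeffs E_nz by blast
  then have "coeff (E m) i \<in> set (coeffs P1) \<union> set (coeffs P2)" by (auto simp: exch_def split: if_splits)
  then show ?thesis using assms by (auto intro: ring_gen.gen)
qed

lemma E_pal: "palindromic (E m)"
  using pal1 pal2 by (simp add: exch_def)

lemma pal_Q0: "palindromic P \<Longrightarrow> lead_coeff P = 1 \<Longrightarrow> coeff P 0 = 1"
  by (metis coeff_0_reflect_poly palindromic_def)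

lemma E_Q0: "coeff (E m) 0 = 1"
  using pal_Q0[OF pal1 l1] pal_Q0[OF pal2 l2] by (simp add: exch_def)

lemma E_shift: "E (m + 2) = E m"
  by (simp add: exch_def)

definition L where "L k = ring_gen (Cs \<union> {x (k - 1), x k, x (k + 1), x (k + 2)})"

lemma L_gen: "Cs \<subseteq> L k" "x (k - 1) \<in> L k" "x k \<in> L k" "x (k + 1) \<in> L k" "x (k + 2) \<in> L k"
  by (auto simp: L_def intro: ring_gen.gen)

lemma L_gen': "j \<in> {k - 1, k, k + 1, k + 2} \<Longrightarrow> x j \<in> L k"
  unfolding L_def by (rule ring_gen.gen) blast

lemma Cs_L: "Cs \<subseteq> Cs \<union> {x (k - 1), x k, x (k + 1), x (k + 2)}" by blast

lemma key_step:
  assumes "a * c = evalP P b" "b * d = evalP Q c" "c * e = evalP P d"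
    "P = E j" "Q = E j'"
    "a \<in> L k" "b \<in> L k" "c \<in> L k" "d \<in> L k" "c \<noteq> 0"
  shows "e \<in> L k"
  using exch_key[of P Q c a b d e "Cs \<union> {x (k - 1), x k, x (k + 1), x (k + 2)}"] assms
    coeff_in_Cs[OF Cs_L] E_pal E_Q0 unfolding L_def by blast

lemma x_up: "\<forall>i\<le>n + 3. x (k - 1 + int i) \<in> L k"
proof (induct n)
  case 0
  show ?case
  proof (intro allI impI)
    fix i :: nat assume "i \<le> 0 + 3"
    then have "i = 0 \<or> i = 1 \<or> i = 2 \<or> i = 3" by auto
    then have "k - 1 + int i \<in> {k - 1, k, k + 1, k + 2}" by auto
    then show "x (k - 1 + int i) \<in> L k" by (rule L_gen')
  qed
next
  case (Suc n)
  define m where "m = k - 1 + int (n + 4)"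
  have h: "x (m - 4) \<in> L k" "x (m - 3) \<in> L k" "x (m - 2) \<in> L k" "x (m - 1) \<in> L k"
    using Suc[rule_format, of n] Suc[rule_format, of "n+1"] Suc[rule_format, of "n+2"]
      Suc[rule_format, of "n+3"] by (simp_all add: m_def algebra_simps)
  have r1: "x (m - 4) * x (m - 2) = evalP (E (m - 3)) (x (m - 3))"
    using rel[of "m - 3"] by (simp add: algebra_simps)
  have r2: "x (m - 3) * x (m - 1) = evalP (E (m - 2)) (x (m - 2))"
    using rel[of "m - 2"] by (simp add: algebra_simps)
  have r3: "x (m - 2) * x m = evalP (E (m - 3)) (x (m - 1))"
    using rel[of "m - 1"] E_shift[of "m - 3"] by (simp add: algebra_simps)
  have "x m \<in> L k" by (rule key_step[OF r1 r2 r3 refl refl h x_nz])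
  then have new: "x (k - 1 + int (Suc n + 3)) \<in> L k" by (simp add: m_def algebra_simps)
  show ?case
  proof (intro allI impI)
    fix i assume "i \<le> Suc n + 3"
    then have "i \<le> n + 3 \<or> i = Suc n + 3" by auto
    then show "x (k - 1 + int i) \<in> L k" using Suc new by blast
  qed
qed

lemma x_down: "\<forall>i\<le>n + 3. x (k + 2 - int i) \<in> L k"
proof (induct n)
  case 0
  show ?case
  proof (intro allI impI)
    fix i :: nat assume "i \<le> 0 + 3"
    then have "i = 0 \<or> i = 1 \<or> i = 2 \<or> i = 3" by auto
    then have "k + 2 - int i \<in> {k - 1, k, k + 1, k + 2}" by auto
    then show "x (k + 2 - int i) \<in> L k" by (rule L_gen')
  qed
next
  case (Suc n)
  define m where "m = k + 2 - int (n + 4)"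
  have h: "x (m + 4) \<in> L k" "x (m + 3) \<in> L k" "x (m + 2) \<in> L k" "x (m + 1) \<in> L k"
    using Suc[rule_format, of n] Suc[rule_format, of "n+1"] Suc[rule_format, of "n+2"]
      Suc[rule_format, of "n+3"] by (simp_all add: m_def algebra_simps)
  have r1: "x (m + 4) * x (m + 2) = evalP (E (m + 1)) (x (m + 3))"
    using rel[of "m + 3"] E_shift[of "m + 1"] by (simp add: algebra_simps)
  have r2: "x (m + 3) * x (m + 1) = evalP (E (m + 2)) (x (m + 2))"
    using rel[of "m + 2"] by (simp add: algebra_simps)
  have r3: "x (m + 2) * x m = evalP (E (m + 1)) (x (m + 1))"
    using rel[of "m + 1"] by (simp add: algebra_simps)
  have "x m \<in> L k" by (rule key_step[OF r1 r2 r3 refl refl h x_nz])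
  then have new: "x (k + 2 - int (Suc n + 3)) \<in> L k" by (simp add: m_def algebra_simps)
  show ?case
  proof (intro allI impI)
    fix i assume "i \<le> Suc n + 3"
    then have "i \<le> n + 3 \<or> i = Suc n + 3" by auto
    then show "x (k + 2 - int i) \<in> L k" using Suc new by blast
  qed
qed

lemma x_in_L: "x m \<in> L k"
proof (cases "m \<ge> k - 1")
  case True
  define i where "i = nat (m - k + 1)"
  have "x (k - 1 + int i) \<in> L k" using x_up[of i k] by simp
  then show ?thesis using True by (simp add: i_def)
next
  case False
  define i where "i = nat (k + 2 - m)"
  have "x (k + 2 - int i) \<in> L k" using x_down[of i k] by simp
  then show ?thesis using False by (simp add: i_def)
qed

lemma clalg_L: "clalg P1 P2 \<subseteq> L k"
  unfolding clalg_def L_def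
  by (rule rg_mono) (use x_in_L[of _ k] in \<open>auto simp: L_def intro: ring_gen.gen\<close>)

end



context cl begin

definition Sp where
  "Sp k = {\<Sum>i\<in>F. c i * stdmon P1 P2 k i | F c. finite F \<and> (\<forall>i\<in>F. c i \<in> R)}"

lemma R_1: "1 \<in> R" by (simp add: coeff_ring_def ring_gen.one)
lemma R_0: "0 \<in> R" by (simp add: coeff_ring_def ring_gen.zero)
lemma R_add: "a \<in> R \<Longrightarrow> b \<in> R \<Longrightarrow> a + b \<in> R" by (simp add: coeff_ring_def ring_gen.add)
lemma R_mult: "a \<in> R \<Longrightarrow> b \<in> R \<Longrightarrow> a * b \<in> R" by (simp add: coeff_ring_def ring_gen.mult)
lemma R_neg: "a \<in> R \<Longrightarrow> - a \<in> R" by (simp add: coeff_ring_def ring_gen.neg)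
lemma R_coeff: "emb (coeff (E m) i) \<in> R"
  unfolding coeff_ring_def by (rule coeff_in_Cs) simp
lemma R_Cs: "y \<in> Cs \<Longrightarrow> y \<in> R"
  unfolding coeff_ring_def by (rule ring_gen.gen)

lemma Sp_0: "0 \<in> Sp k"
  unfolding Sp_def by (rule CollectI, rule exI[of _ "{}"]) auto

lemma Sp_std: "stdmon P1 P2 k i \<in> Sp k"
  unfolding Sp_def by (rule CollectI, rule exI[of _ "{i}"], rule exI[of _ "\<lambda>_. 1"]) (auto simp: R_1)

lemma Sp_add:
  assumes "a \<in> Sp k" "b \<in> Sp k" shows "a + b \<in> Sp k"
proof -
  obtain F c where a: "a = (\<Sum>i\<in>F. c i * stdmon P1 P2 k i)" "finite F" "\<forall>i\<in>F. c i \<in> R"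
    using assms(1) unfolding Sp_def by blast
  obtain G d where b: "b = (\<Sum>i\<in>G. d i * stdmon P1 P2 k i)" "finite G" "\<forall>i\<in>G. d i \<in> R"
    using assms(2) unfolding Sp_def by blast
  define e where "e i = (if i \<in> F then c i else 0) + (if i \<in> G then d i else 0)" for i
  have "a = (\<Sum>i\<in>F \<union> G. (if i \<in> F then c i else 0) * stdmon P1 P2 k i)"
    unfolding a(1) by (rule sum.mono_neutral_cong_left) (use a b in auto)
  moreover have "b = (\<Sum>i\<in>F \<union> G. (if i \<in> G then d i else 0) * stdmon P1 P2 k i)"
    unfolding b(1) by (rule sum.mono_neutral_cong_left) (use a b in auto)
  ultimately have "a + b = (\<Sum>i\<in>F \<union> G. e i * stdmon P1 P2 k i)"
    by (simp add: e_def sum.distrib[symmetric] distrib_right)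
  moreover have "\<forall>i\<in>F \<union> G. e i \<in> R" using a b by (auto simp: e_def R_add R_0)
  ultimately show ?thesis unfolding Sp_def using a b by blast
qed

lemma Sp_smult:
  assumes "r \<in> R" "a \<in> Sp k" shows "r * a \<in> Sp k"
proof -
  obtain F c where a: "a = (\<Sum>i\<in>F. c i * stdmon P1 P2 k i)" "finite F" "\<forall>i\<in>F. c i \<in> R"
    using assms(2) unfolding Sp_def by blast
  have "r * a = (\<Sum>i\<in>F. (r * c i) * stdmon P1 P2 k i)"
    by (simp add: a(1) sum_distrib_left mult.assoc)
  moreover have "\<forall>i\<in>F. r * c i \<in> R" using a assms by (auto simp: R_mult)
  ultimately show ?thesis unfolding Sp_def using a
    by (intro CollectI exI[where x=F] exI[where x="\<lambda>i. r * c i"]) auto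
qed

lemma Sp_neg: "a \<in> Sp k \<Longrightarrow> - a \<in> Sp k"
  using Sp_smult[OF R_neg[OF R_1]] by simp

lemma Sp_sum: "(\<And>i. i \<in> A \<Longrightarrow> f i \<in> Sp k) \<Longrightarrow> sum f A \<in> Sp k"
  by (induct A rule: infinite_finite_induct) (auto intro: Sp_add Sp_0)

definition mono4 where
  "mono4 k p q r s = x (k - 1) ^ p * x k ^ q * x (k + 1) ^ r * x (k + 2) ^ s"

lemma pos_part_simps:
  "pos_part (int s - int q) = (if q = 0 then s else if s = 0 then 0 else pos_part (int s - int q))"
  "pos_part (- (int s - int q)) = (if s = 0 then q else if q = 0 then 0 else pos_part (- (int s - int q)))"
  by (auto simp: pos_part_def)

lemma mono4_std:
  assumes "p = 0 \<or> r = 0" "q = 0 \<or> s = 0"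
  shows "mono4 k p q r s = stdmon P1 P2 k (int s - int q, int p - int r)"
  using assms by (auto simp: mono4_def stdmon_def pos_part_def)

lemma std_mono4: "stdmon P1 P2 k a = mono4 k (pos_part (snd a)) (pos_part (- fst a)) (pos_part (- snd a)) (pos_part (fst a))"
  by (simp add: stdmon_def mono4_def case_prod_beta)

lemma mono4_in_Sp: "mono4 k p q r s \<in> Sp k"
proof (induct "p + s" arbitrary: p q r s rule: less_induct)
  case less
  show ?case
  proof (cases "p > 0 \<and> r > 0")
    case True
    have rr: "x (k - 1) * x (k + 1) = (\<Sum>i\<le>degree (E k). emb (coeff (E k) i) * x k ^ i)"
      using rel[of k] by (simp add: evalP_sum_form mult.commute)
    have "mono4 k p q r s = mono4 k (p - 1) q (r - 1) s * (x (k - 1) * x (k + 1))"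
      using True by (simp add: mono4_def power_eq_if mult_ac)
    also have "\<dots> = (\<Sum>i\<le>degree (E k). emb (coeff (E k) i) * mono4 k (p - 1) (q + i) (r - 1) s)"
      unfolding rr sum_distrib_left by (simp add: mono4_def power_add mult_ac)
    also have "\<dots> \<in> Sp k"
      by (rule Sp_sum, rule Sp_smult[OF R_coeff], rule less) (use True in auto)
    finally show ?thesis .
  next
    case F1: False
    show ?thesis
    proof (cases "q > 0 \<and> s > 0")
      case True
      have rr: "x k * x (k + 2) = (\<Sum>i\<le>degree (E (k + 1)). emb (coeff (E (k + 1)) i) * x (k + 1) ^ i)"
        using rel[of "k + 1"] by (simp add: evalP_sum_form mult.commute add.assoc)
      have "mono4 k p q r s = mono4 k p (q - 1) r (s - 1) * (x k * x (k + 2))"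
        using True by (simp add: mono4_def power_eq_if mult_ac)
      also have "\<dots> = (\<Sum>i\<le>degree (E (k + 1)). emb (coeff (E (k + 1)) i) * mono4 k p (q - 1) (r + i) (s - 1))"
        unfolding rr sum_distrib_left by (simp add: mono4_def power_add mult_ac)
      also have "\<dots> \<in> Sp k"
        by (rule Sp_sum, rule Sp_smult[OF R_coeff], rule less) (use True in auto)
      finally show ?thesis .
    next
      case False
      then show ?thesis using F1 mono4_std[of p r q s k] Sp_std by auto
    qed
  qed
qed

lemma gen_mult_Sp:
  assumes "g \<in> {x (k - 1), x k, x (k + 1), x (k + 2)}"
  shows "g * stdmon P1 P2 k a \<in> Sp k"
proof -
  obtain p q r s where st: "stdmon P1 P2 k a = mono4 k p q r s" using std_mono4 by blast
  have "g * mono4 k p q r s \<in> Sp k"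
    using assms mono4_in_Sp[of k "Suc p" q r s] mono4_in_Sp[of k p "Suc q" r s]
      mono4_in_Sp[of k p q "Suc r" s] mono4_in_Sp[of k p q r "Suc s"]
    by (auto simp: mono4_def mult_ac)
  then show ?thesis using st by simp
qed

lemma gen_mult_Sp':
  assumes "g \<in> {x (k - 1), x k, x (k + 1), x (k + 2)}" "m \<in> Sp k"
  shows "g * m \<in> Sp k"
proof -
  obtain F c where a: "m = (\<Sum>i\<in>F. c i * stdmon P1 P2 k i)" "finite F" "\<forall>i\<in>F. c i \<in> R"
    using assms(2) unfolding Sp_def by blast
  have "g * m = (\<Sum>i\<in>F. c i * (g * stdmon P1 P2 k i))"
    by (simp add: a(1) sum_distrib_left mult_ac)
  also have "\<dots> \<in> Sp k"
    using a(3) by (intro Sp_sum Sp_smult gen_mult_Sp[OF assms(1)]) auto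
  finally show ?thesis .
qed

lemma L_mult_Sp:
  assumes "y \<in> L k" shows "\<forall>m\<in>Sp k. y * m \<in> Sp k"
  using assms unfolding L_def
proof (induct rule: ring_gen.induct)
  case (gen s)
  then show ?case
  proof
    assume "s \<in> Cs" then show ?thesis using Sp_smult R_Cs by blast
  next
    assume "s \<in> {x (k - 1), x k, x (k + 1), x (k + 2)}"
    then show ?thesis using gen_mult_Sp' by blast
  qed
next
  case zero then show ?case using Sp_0 by simp
next
  case one then show ?case by simp
next
  case (add a b) then show ?case by (simp add: distrib_right Sp_add)
next
  case (neg a) then show ?case using Sp_neg by simp
next
  case (mult a b) then show ?case by (simp add: mult.assoc)
qed

lemma clalg_Sp: "clalg P1 P2 \<subseteq> Sp k"
proof
  fix y assume "y \<in> clalg P1 P2"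
  then have "y \<in> L k" using clalg_L by blast
  moreover have "1 \<in> Sp k" using Sp_std[of k "(0, 0)"] by (simp add: stdmon_def pos_part_def)
  ultimately show "y \<in> Sp k" using L_mult_Sp by (metis mult.right_neutral)
qed

lemma R_clalg: "R \<subseteq> clalg P1 P2"
  unfolding coeff_ring_def clalg_def by (rule rg_sub) blast

lemma x_clalg: "x m \<in> clalg P1 P2"
  unfolding clalg_def by (rule ring_gen.gen) blast

lemma Sp_clalg: "Sp k \<subseteq> clalg P1 P2"
proof
  fix y assume "y \<in> Sp k"
  then obtain F c where a: "y = (\<Sum>i\<in>F. c i * stdmon P1 P2 k i)" "finite F" "\<forall>i\<in>F. c i \<in> R"
    unfolding Sp_def by blast
  have st: "stdmon P1 P2 k i \<in> clalg P1 P2" for i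
    unfolding stdmon_def clalg_def case_prod_beta
    by (intro ring_gen.mult rg_power ring_gen.gen) auto
  show "y \<in> clalg P1 P2"
    unfolding a(1) using a(3) R_clalg st unfolding clalg_def
    by (intro rg_sum ring_gen.mult) auto
qed

end



context cl begin

lemma R_emb: "y \<in> R \<Longrightarrow> \<exists>t. y = emb t"
  unfolding coeff_ring_def
proof (induct rule: ring_gen.induct)
  case (gen s) then show ?case by blast
next
  case zero then show ?case by (metis emb_0)
next
  case one then show ?case by (metis emb_1)
next
  case (add a b) then show ?case by (metis emb_add)
next
  case (neg a) then show ?case by (metis emb_neg)
next
  case (mult a b) then show ?case by (metis emb_mult)
qed

lemma std_scaled:
  fixes a :: "int \<times> int" and M :: nat
  assumes "\<bar>fst a\<bar> \<le> int M" "\<bar>snd a\<bar> \<le> int M"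
  shows "stdmon P1 P2 k a * (x k ^ M * x (k + 1) ^ M)
    = x k ^ nat (int M - fst a) * x (k + 1) ^ nat (int M - snd a)
      * evalP (E k) (x k) ^ pos_part (snd a) * evalP (E (k + 1)) (x (k + 1)) ^ pos_part (fst a)"
proof -
  define p where "p = pos_part (snd a)"
  define q where "q = pos_part (- fst a)"
  define r where "r = pos_part (- snd a)"
  define s where "s = pos_part (fst a)"
  define e1 where "e1 = nat (int M - fst a)"
  define e2 where "e2 = nat (int M - snd a)"
  have n1: "q + M = s + e1" using assms by (simp add: q_def s_def e1_def pos_part_def)
  have n2: "r + M = p + e2" using assms by (simp add: p_def r_def e2_def pos_part_def)
  have h0: "x (k - 1) * x (k + 1) = evalP (E k) (x k)" using rel[of k] by (simp add: mult.commute)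
  have h3: "x (k + 2) * x k = evalP (E (k + 1)) (x (k + 1))" using rel[of "k + 1"] by (simp add: add.assoc)
  have "stdmon P1 P2 k a * (x k ^ M * x (k + 1) ^ M)
      = x (k - 1) ^ p * x (k + 2) ^ s * (x k ^ (q + M) * x (k + 1) ^ (r + M))"
    by (simp add: stdmon_def case_prod_beta p_def q_def r_def s_def power_add mult_ac)
  also have "\<dots> = (x (k - 1) * x (k + 1)) ^ p * (x (k + 2) * x k) ^ s * x k ^ e1 * x (k + 1) ^ e2"
    unfolding n1 n2 by (simp add: power_add power_mult_distrib mult_ac)
  also have "\<dots> = x k ^ e1 * x (k + 1) ^ e2 * evalP (E k) (x k) ^ p * evalP (E (k + 1)) (x (k + 1)) ^ s"
    unfolding h0[symmetric] h3[symmetric] by (simp add: mult_ac)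
  finally show ?thesis by (simp add: e1_def e2_def p_def s_def)
qed

lemma std_indep:
  assumes F: "finite F" and cR: "\<forall>i\<in>F. c i \<in> R"
    and sum0: "(\<Sum>i\<in>F. c i * stdmon P1 P2 k i) = 0"
  shows "\<forall>i\<in>F. c i = 0"
proof (rule ccontr)
  assume nz: "\<not> (\<forall>i\<in>F. c i = 0)"
  define c' where "c' i = (SOME t. c i = emb t)" for i
  have cc: "c i = emb (c' i)" if "i \<in> F" for i
    unfolding c'_def using R_emb[of "c i"] cR that by (metis (mono_tags) someI_ex)
  define u where "u = x k"
  define v where "v = x (k + 1)"
  define M where "M = (\<Sum>a\<in>F. nat \<bar>fst a\<bar> + nat \<bar>snd a\<bar>)"
  have Mb: "\<bar>fst a\<bar> \<le> int M" "\<bar>snd a\<bar> \<le> int M" if "a \<in> F" for a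
  proof -
    have "nat \<bar>fst a\<bar> + nat \<bar>snd a\<bar> \<le> M"
      unfolding M_def using F that by (intro member_le_sum) auto
    then show "\<bar>fst a\<bar> \<le> int M" "\<bar>snd a\<bar> \<le> int M" by linarith+
  qed
  define e1 where "e1 a = nat (int M - fst a)" for a :: "int \<times> int"
  define e2 where "e2 a = nat (int M - snd a)" for a :: "int \<times> int"
  define A where "A a = smult (c' a) (monom 1 (e1 a) * E k ^ pos_part (snd a))" for a
  define B where "B a = monom 1 (e2 a) * E (k + 1) ^ pos_part (fst a)" for a
  define G where "G = (\<Sum>a\<in>F. bp (A a) (B a))"
  have "poly2 G u v = (\<Sum>a\<in>F. c a * (stdmon P1 P2 k a * (u ^ M * v ^ M)))"
    unfolding G_def poly2_sum
  proof (rule sum.cong[OF refl])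
    fix a assume aF: "a \<in> F"
    show "poly2 (bp (A a) (B a)) u v = c a * (stdmon P1 P2 k a * (u ^ M * v ^ M))"
      unfolding poly2_bp u_def v_def std_scaled[OF Mb[OF aF]] cc[OF aF]
      by (simp add: A_def B_def e1_def e2_def evalP_smult evalP_mult evalP_monom evalP_power mult_ac)
  qed
  also have "\<dots> = 0"
    using sum0 by (simp add: sum_distrib_right[symmetric] mult.assoc[symmetric])
  finally have "G = 0" using ind_all[of k] unfolding ind_def u_def v_def by blast
  define F' where "F' = {a\<in>F. c' a \<noteq> 0}"
  have F'ne: "F' \<noteq> {}" using nz cc by (force simp: F'_def)
  have F'fin: "finite F'" using F by (simp add: F'_def)
  define mx where "mx = Max ((\<lambda>a. fst a + snd a) ` F')"
  have "mx \<in> (\<lambda>a. fst a + snd a) ` F'" unfolding mx_def using F'ne F'fin by simp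
  then obtain a0 where a0: "a0 \<in> F'" "fst a0 + snd a0 = mx" by blast
  have a0max: "fst a + snd a \<le> fst a0 + snd a0" if "a \<in> F'" for a
    unfolding a0(2) mx_def using F'fin that by simp
  have a0F: "a0 \<in> F" "c' a0 \<noteq> 0" using a0 by (auto simp: F'_def)
  define t where "t a = coeff (A a) (e1 a0) * coeff (B a) (e2 a0)" for a
  have "0 = coeff (coeff G (e2 a0)) (e1 a0)" using \<open>G = 0\<close> by simp
  also have "\<dots> = (\<Sum>a\<in>F. t a)" by (simp add: G_def coeff_sum coeff_bp t_def)
  also have "\<dots> = t a0 + (\<Sum>a\<in>F - {a0}. t a)" using F a0F by (simp add: sum.remove)
  also have "(\<Sum>a\<in>F - {a0}. t a) = 0"
  proof (rule sum.neutral, rule ballI)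
    fix a assume a: "a \<in> F - {a0}"
    show "t a = 0"
    proof (rule ccontr)
      assume tn: "t a \<noteq> 0"
      then have "c' a \<noteq> 0" by (simp add: t_def A_def)
      then have aF': "a \<in> F'" using a by (simp add: F'_def)
      have "\<not> e1 a0 < e1 a" "\<not> e2 a0 < e2 a"
        using tn by (auto simp: t_def A_def B_def coeff_monom_mult)
      then have "fst a0 \<le> fst a" "snd a0 \<le> snd a"
        using Mb[OF a0F(1)] Mb[of a] a by (auto simp: e1_def e2_def)
      moreover have "fst a + snd a \<le> fst a0 + snd a0" by (rule a0max[OF aF'])
      ultimately have "a = a0" by (simp add: prod_eq_iff)
      then show False using a by simp
    qed
  qed
  also have "t a0 = c' a0"
    by (simp add: t_def A_def B_def coeff_monom_mult coeff_0_power E_Q0)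
  finally show False using a0F by simp
qed

theorem main: "is_basis_over R (clalg P1 P2) (stdmon P1 P2 k)"
proof -
  have "clalg P1 P2 = Sp k" using clalg_Sp Sp_clalg by blast
  then show ?thesis unfolding is_basis_over_def Sp_def using std_indep by blast
qed

end

theorem theorem2p4:
  fixes P1 P2 :: "'k::field_char_0 poly" and k :: int
  assumes "lead_coeff P1 = 1" and "lead_coeff P2 = 1"
    and "palindromic P1" and "palindromic P2"
  shows "is_basis_over (coeff_ring P1 P2) (clalg P1 P2) (stdmon P1 P2 k)"
proof -
  interpret cl P1 P2 using assms by unfold_locales
  show ?thesis by (rule main)
qed



end
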